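(* Let $\mathcal{X}$ be a finite data domain, $\widetilde D\in\mathcal{X}^n$ a private dataset, $\widehat D\in\mathcal{X}^m$ a public dataset with support $\widehat{\mathcal{X}}$, $Q$ a finite set of statistical queries $q:\mathcal{X}\to[0,1]$, $\tilde\varepsilon>0$ and $\beta\in(0,1)$. There exist absolute constants such that, running PMW$^{\mathrm{Pub}}$ with number of iterations $T=\Theta\left(\frac{n\tilde\varepsilon\sqrt{\log m}}{\log|Q|}+\log(1/\beta)\right)$, its output is a distribution $A$ on $\widehat{\mathcal{X}}$ such that, with probability at least $1-\beta$, \[\max_{q\in Q}\left|q(A)-q(\widetilde D)\right|\le O\left(\sqrt{\frac{\log(|Q|)\cdot\left(\sqrt{\log m}+\log(1/\beta)\right)}{n\tilde\varepsilon}}+f_{\widetilde D,Q}(\widehat{\mathcal{X}})\right).\]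
   Context: For a dataset $D=(x_1,\dots,x_k)$, $q(D)=\frac1k\sum_i q(x_i)$; for a distribution $A$ on $\mathcal{X}$, $q(A)=\sum_x A(x)q(x)$. The best mixture error is $f_{\widetilde D,Q}(S)=\min_{\mu\in\Delta(S)}\max_{q\in Q}|q(\widetilde D)-\sum_{x\in S}\mu_x q(x)|$, with $\Delta(S)$ the probability distributions on $S$. The support $\widehat{\mathcal{X}}$ is the set of distinct rows of $\widehat D$. Algorithm PMW$^{\mathrm{Pub}}$ (inputs $\widetilde D,\widehat D,Q,\tilde\varepsilon,T$): let $A_0$ be the empirical distribution of $\widehat D$ on $\widehat{\mathcal{X}}$ and $\varepsilon_0=\tilde\varepsilon/\sqrt{2T}$. For $t=1,\dots,T$: (1) select $q_t\in Q$ privately with score $s_t(q)=|q(A_{t-1})-q(\widetilde D)|$, either by the exponential mechanism, $\Pr[q_t=q]\propto\exp(\frac{\varepsilon_0 n}{2}s_t(q))$, or by the permute-and-flip mechanism (go through $Q$ in uniformly random order and accept the current $q$ with probability $\exp(\frac{\varepsilon_0 n}{2}(s_t(q)-\max_{q'}s_t(q')))$, stopping at the first acceptance); (2) set $a_t=q_t(\widetilde D)+Z_t$ with $Z_t\sim\mathcal{N}(0,1/(n^2\varepsilon_0^2))$ independent, then clip $a_t$ to $[0,1]$; (3) set $A_t(x)\propto A_{t-1}(x)\exp(q_t(x)(a_t-q_t(A_{t-1}))/2)$ for $x\in\widehat{\mathcal{X}}$. Output $A=\frac1T\sum_{t=1}^T A_{t-1}$. *)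

theory Defs
  imports "HOL-Probability.Probability" "HOL-Combinatorics.Multiset_Permutations"
begin

definition qdata :: "('a \<Rightarrow> real) \<Rightarrow> 'a list \<Rightarrow> real" where
  "qdata q D = (\<Sum>x\<leftarrow>D. q x) / real (length D)"

definition qdist :: "('a \<Rightarrow> real) \<Rightarrow> 'a set \<Rightarrow> ('a \<Rightarrow> real) \<Rightarrow> real" where
  "qdist q S A = (\<Sum>x\<in>S. A x * q x)"

definition prob_simplex :: "'a set \<Rightarrow> ('a \<Rightarrow> real) set" where
  "prob_simplex S = {\<mu>. (\<forall>x\<in>S. 0 \<le> \<mu> x) \<and> (\<Sum>x\<in>S. \<mu> x) = 1}"

text \<open>Best mixture error f_{D,Q}(S) (the minimum is attained; we write the infimum).\<close>
definition best_mixture_error :: "'a list \<Rightarrow> ('a \<Rightarrow> real) set \<Rightarrow> 'a set \<Rightarrow> real" where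
  "best_mixture_error D Q S =
     (INF \<mu> \<in> prob_simplex S. Max ((\<lambda>q. \<bar>qdata q D - (\<Sum>x\<in>S. \<mu> x * q x)\<bar>) ` Q))"

definition empirical :: "'a list \<Rightarrow> 'a \<Rightarrow> real" where
  "empirical D x = real (count_list D x) / real (length D)"

definition exp_mech :: "real \<Rightarrow> 'q set \<Rightarrow> ('q \<Rightarrow> real) \<Rightarrow> 'q pmf" where
  "exp_mech c Q s = embed_pmf (\<lambda>q. if q \<in> Q then exp (c * s q) / (\<Sum>q'\<in>Q. exp (c * s q')) else 0)"

text \<open>Scan a list, accepting the current element q with probability p q
  (the default d is only returned if nothing is accepted, which cannot happen
   for permute-and-flip since the maximiser is accepted with probability 1).\<close>
fun pf_scan :: "('q \<Rightarrow> real) \<Rightarrow> 'q \<Rightarrow> 'q list \<Rightarrow> 'q pmf" where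
  "pf_scan p d [] = return_pmf d"
| "pf_scan p d (q # qs) =
     bind_pmf (bernoulli_pmf (p q)) (\<lambda>b. if b then return_pmf q else pf_scan p d qs)"

definition permute_flip :: "real \<Rightarrow> 'q set \<Rightarrow> ('q \<Rightarrow> real) \<Rightarrow> 'q pmf" where
  "permute_flip c Q s =
     bind_pmf (pmf_of_set (permutations_of_set Q))
       (\<lambda>xs. pf_scan (\<lambda>q. exp (c * (s q - Max (s ` Q)))) (SOME q. q \<in> Q) xs)"

datatype sel_mech = ExpMech | PermFlip

definition select :: "sel_mech \<Rightarrow> real \<Rightarrow> 'q set \<Rightarrow> ('q \<Rightarrow> real) \<Rightarrow> 'q pmf" where
  "select m c Q s = (case m of ExpMech \<Rightarrow> exp_mech c Q s | PermFlip \<Rightarrow> permute_flip c Q s)"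

definition clip01 :: "real \<Rightarrow> real" where
  "clip01 a = max 0 (min 1 a)"

definition mw_update :: "'a set \<Rightarrow> ('a \<Rightarrow> real) \<Rightarrow> ('a \<Rightarrow> real) \<Rightarrow> real \<Rightarrow> 'a \<Rightarrow> real" where
  "mw_update S A q a =
     (\<lambda>x. A x * exp (q x * (a - qdist q S A) / 2) /
          (\<Sum>y\<in>S. A y * exp (q y * (a - qdist q S A) / 2)))"

definition gauss :: "real \<Rightarrow> real measure" where
  "gauss \<sigma> = density lborel (normal_density 0 \<sigma>)"

text \<open>pmw_succ mech D S Q e0 E k A hist: probability that the predicate E holds of the
  final history [A_0,...,A_{T-1}], when k iterations remain, the current
  distribution is A and hist = [A_0,...,A_{t-1}] are the previous ones.
  D is the private dataset (n = length D), e0 = eps0.\<close>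
fun pmw_succ :: "sel_mech \<Rightarrow> 'a list \<Rightarrow> 'a set \<Rightarrow> ('a \<Rightarrow> real) set \<Rightarrow> real
    \<Rightarrow> (('a \<Rightarrow> real) list \<Rightarrow> bool) \<Rightarrow> nat \<Rightarrow> ('a \<Rightarrow> real) \<Rightarrow> ('a \<Rightarrow> real) list \<Rightarrow> ennreal" where
  "pmw_succ mech D S Q e0 E 0 A hist = (if E hist then 1 else 0)"
| "pmw_succ mech D S Q e0 E (Suc k) A hist =
     (\<integral>\<^sup>+ q. (\<integral>\<^sup>+ z. pmw_succ mech D S Q e0 E k
                          (mw_update S A q (clip01 (qdata q D + z))) (hist @ [A])
               \<partial>gauss (1 / (real (length D) * e0)))
      \<partial>measure_pmf (select mech (e0 * real (length D) / 2) Q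
                       (\<lambda>q. \<bar>qdist q S A - qdata q D\<bar>)))"

text \<open>Probability that the output A = (1/T) sum_{t=1}^T A_{t-1} of PMW^Pub satisfies P.\<close>
definition pmw_pub_prob :: "sel_mech \<Rightarrow> 'a list \<Rightarrow> 'a list \<Rightarrow> ('a \<Rightarrow> real) set \<Rightarrow> real \<Rightarrow> nat
    \<Rightarrow> (('a \<Rightarrow> real) \<Rightarrow> bool) \<Rightarrow> ennreal" where
  "pmw_pub_prob mech Dpriv Dpub Q eps T P =
     pmw_succ mech Dpriv (set Dpub) Q (eps / sqrt (2 * real T))
       (\<lambda>hist. P (\<lambda>x. (\<Sum>B\<leftarrow>hist. B x) / real T)) T (empirical Dpub) []"

end

theory Submission
  imports Defs
begin


lemma pf_scan_pmf:
  assumes "distinct xs" "\<forall>x\<in>set xs. 0 \<le> p x \<and> p x \<le> 1" "\<exists>x\<in>set xs. p x = 1"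
  shows "pmf (pf_scan p d xs) q \<le> (if q \<in> set xs then p q else 0)"
  using assms
proof (induction xs)
  case Nil then show ?case by simp
next
  case (Cons x xs)
  have px: "0 \<le> p x" "p x \<le> 1" using Cons.prems(2) by auto
  show ?case
  proof (cases "p x = 1")
    case True
    then show ?thesis using Cons.prems(2) by (auto simp: pmf_bind indicator_def)
  next
    case False
    then have ex: "\<exists>x\<in>set xs. p x = 1" using Cons.prems(3) by auto
    have IH: "pmf (pf_scan p d xs) q \<le> (if q \<in> set xs then p q else 0)"
      using Cons.IH Cons.prems(1,2) ex by auto
    have eq: "pmf (pf_scan p d (x # xs)) q = indicator {x} q * p x + pmf (pf_scan p d xs) q * (1 - p x)"
      using px by (simp add: pmf_bind indicator_def)
    show ?thesis
    proof (cases "q = x")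
      case True
      then have "q \<notin> set xs" using Cons.prems(1) by auto
      then have "pmf (pf_scan p d xs) q = 0" using IH by (metis pmf_nonneg order_antisym)
      then show ?thesis using eq True by simp
    next
      case False
      have "pmf (pf_scan p d xs) q * (1 - p x) \<le> (if q \<in> set xs then p q else 0) * 1"
        using IH px Cons.prems(2) by (intro mult_mono) auto
      then show ?thesis using eq False by auto
    qed
  qed
qed




lemma exp_mech_pmf:
  assumes Q: "finite Q" "Q \<noteq> {}" and c: "c > 0"
  shows "pmf (exp_mech c Q s) q \<le> (if q \<in> Q then exp (- c * (Max (s ` Q) - s q)) else 0)"
proof -
  define Z where "Z = (\<Sum>q'\<in>Q. exp (c * s q'))"
  define g where "g = (\<lambda>q. if q \<in> Q then exp (c * s q) / Z else 0)"
  have Zpos: "Z > 0" unfolding Z_def using Q by (intro sum_pos) auto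
  have gnn: "\<And>x. 0 \<le> g x" unfolding g_def using Zpos by auto
  have "(\<integral>\<^sup>+x. ennreal (g x) \<partial>count_space UNIV) = (\<Sum>x\<in>Q. ennreal (g x))"
    using Q by (intro nn_integral_count_space') (auto simp: g_def)
  also have "\<dots> = ennreal (\<Sum>x\<in>Q. g x)" using gnn by (simp add: sum_ennreal)
  also have "(\<Sum>x\<in>Q. g x) = 1" unfolding g_def using Zpos
    by (simp add: Z_def sum_divide_distrib[symmetric])
  finally have int1: "(\<integral>\<^sup>+x. ennreal (g x) \<partial>count_space UNIV) = 1" by simp
  have pe: "pmf (exp_mech c Q s) q = g q"
    unfolding exp_mech_def g_def[symmetric] Z_def[symmetric]
    by (rule pmf_embed_pmf[OF gnn int1])
  show ?thesis
  proof (cases "q \<in> Q")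
    case True
    have mx: "Max (s ` Q) \<in> s ` Q" using Q by auto
    then obtain q0 where q0: "q0 \<in> Q" "Max (s ` Q) = s q0" by auto
    have "exp (c * Max (s ` Q)) \<le> Z" unfolding Z_def q0(2)
      using Q q0(1) by (intro member_le_sum) auto
    then have "exp (c * s q) / Z \<le> exp (c * s q) / exp (c * Max (s ` Q))"
      using Zpos by (intro divide_left_mono) auto
    also have "\<dots> = exp (- c * (Max (s ` Q) - s q))"
      by (simp add: exp_diff[symmetric] algebra_simps)
    finally show ?thesis using True pe g_def by simp
  next
    case False then show ?thesis using pe g_def by simp
  qed
qed

lemma permute_flip_pmf:
  assumes Q: "finite Q" "Q \<noteq> {}" and c: "c > 0"
  shows "pmf (permute_flip c Q s) q \<le> (if q \<in> Q then exp (- c * (Max (s ` Q) - s q)) else 0)"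
proof -
  define p where "p = (\<lambda>q. exp (c * (s q - Max (s ` Q))))"
  define b where "b = (if q \<in> Q then exp (- c * (Max (s ` Q) - s q)) else 0)"
  define N where "N = pmf_of_set (permutations_of_set Q)"
  have Pne: "permutations_of_set Q \<noteq> {}" using Q by simp
  have setN: "set_pmf N = permutations_of_set Q" unfolding N_def using Pne Q by simp
  have bnd: "pmf (pf_scan p (SOME q. q \<in> Q) xs) q \<le> b" if xs: "xs \<in> permutations_of_set Q" for xs
  proof -
    have sx: "set xs = Q" "distinct xs" using permutations_of_setD[OF xs] by auto
    have p01: "\<forall>x\<in>set xs. 0 \<le> p x \<and> p x \<le> 1"
    proof
      fix x assume "x \<in> set xs"
      then have "s x \<le> Max (s ` Q)" using Q sx by auto
      then show "0 \<le> p x \<and> p x \<le> 1" unfolding p_def using c by (auto simp: mult_nonneg_nonpos)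
    qed
    have mx: "Max (s ` Q) \<in> s ` Q" using Q by auto
    then obtain q0 where q0: "q0 \<in> Q" "Max (s ` Q) = s q0" by auto
    have ex: "\<exists>x\<in>set xs. p x = 1" using q0 sx unfolding p_def by auto
    have "pmf (pf_scan p (SOME q. q \<in> Q) xs) q \<le> (if q \<in> set xs then p q else 0)"
      by (rule pf_scan_pmf[OF sx(2) p01 ex])
    also have "\<dots> = b" unfolding b_def p_def sx by (simp add: algebra_simps)
    finally show ?thesis .
  qed
  have "pmf (permute_flip c Q s) q = (\<integral>xs. pmf (pf_scan p (SOME q. q \<in> Q) xs) q \<partial>measure_pmf N)"
    unfolding permute_flip_def p_def N_def by (simp add: pmf_bind)
  also have "\<dots> \<le> b"
    using bnd setN Q by (intro measure_pmf.integral_le_const integrable_measure_pmf_finite)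
      (auto simp: AE_measure_pmf_iff)
  finally show ?thesis unfolding b_def .
qed

lemma select_pmf:
  assumes Q: "finite Q" "Q \<noteq> {}" and c: "c > 0"
  shows "pmf (select mech c Q s) q \<le> (if q \<in> Q then exp (- c * (Max (s ` Q) - s q)) else 0)"
  using exp_mech_pmf[OF assms] permute_flip_pmf[OF assms]
  by (cases mech) (auto simp: select_def)




lemma nd_identity: "\<sigma> > 0 \<Longrightarrow> normal_density 0 \<sigma> z * exp (z^2 / (4 * \<sigma>^2)) = sqrt 2 * normal_density 0 (sqrt 2 * \<sigma>) z"
proof -
  assume s: "\<sigma> > 0"
  have e: "exp (- (z^2) / (2 * \<sigma>^2)) * exp (z^2 / (4 * \<sigma>^2)) = exp (- (z^2) / (2 * (sqrt 2 * \<sigma>)^2))"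
    unfolding exp_add[symmetric] using s by (simp add: power_mult_distrib field_simps)
  have sq: "sqrt (2 * pi * (sqrt 2 * \<sigma>)^2) = sqrt 2 * sqrt (2 * pi * \<sigma>^2)"
    by (simp add: power_mult_distrib real_sqrt_mult[symmetric] algebra_simps)
  show ?thesis unfolding normal_density_def sq
    using e[symmetric] by (simp add: field_simps)
qed


lemma one_minus_nn_integral:
  assumes N: "prob_space N" and f: "f \<in> borel_measurable N" and fnn: "\<And>x. 0 \<le> f x"
    and bnd: "(\<integral>\<^sup>+x. ennreal (f x) \<partial>N) \<le> ennreal B" and B: "0 \<le> B"
  shows "ennreal (1 - B) \<le> (\<integral>\<^sup>+x. ennreal (1 - f x) \<partial>N)"
proof -
  interpret prob_space N by fact
  have pw: "1 \<le> ennreal (1 - f x) + ennreal (f x)" for x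
  proof (cases "f x \<le> 1")
    case True
    then have "ennreal (1 - f x) + ennreal (f x) = ennreal (1 - f x + f x)"
      using fnn[of x] by (subst ennreal_plus) auto
    then show ?thesis by simp
  next
    case False
    then have "1 \<le> ennreal (f x)" by (simp add: ennreal_ge_1)
    then show ?thesis by (metis add.commute add_increasing2 zero_le)
  qed
  have "1 = (\<integral>\<^sup>+x. 1 \<partial>N)" by (simp add: emeasure_space_1)
  also have "\<dots> \<le> (\<integral>\<^sup>+x. ennreal (1 - f x) + ennreal (f x) \<partial>N)"
    by (intro nn_integral_mono pw)
  also have "\<dots> = (\<integral>\<^sup>+x. ennreal (1 - f x) \<partial>N) + (\<integral>\<^sup>+x. ennreal (f x) \<partial>N)"
    using f by (intro nn_integral_add) auto
  also have "\<dots> \<le> (\<integral>\<^sup>+x. ennreal (1 - f x) \<partial>N) + ennreal B"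
    using bnd by (intro add_left_mono)
  finally have *: "1 \<le> (\<integral>\<^sup>+x. ennreal (1 - f x) \<partial>N) + ennreal B" .
  show ?thesis
  proof (cases "B \<le> 1")
    case True
    have "ennreal (1 - B) = 1 - ennreal B" using B by (metis ennreal_1 ennreal_minus)
    also have "\<dots> \<le> (\<integral>\<^sup>+x. ennreal (1 - f x) \<partial>N)"
      using * by (simp add: ennreal_minus_le_iff add.commute)
    finally show ?thesis .
  next
    case False then show ?thesis by (simp add: ennreal_neg)
  qed
qed

lemma gauss_prob: "\<sigma> > 0 \<Longrightarrow> prob_space (gauss \<sigma>)"
  unfolding gauss_def by (rule prob_space_normal_density)

lemma sets_gauss[simp]: "sets (gauss \<sigma>) = sets borel"
  unfolding gauss_def by simp

lemma gauss_mgf_sq: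
  assumes s: "\<sigma> > 0" and b: "0 \<le> b" "b \<le> 1 / (4 * \<sigma>^2)"
  shows "(\<integral>\<^sup>+z. ennreal (exp (b * z^2)) \<partial>gauss \<sigma>) \<le> ennreal (sqrt 2)"
proof -
  have "(\<integral>\<^sup>+z. ennreal (exp (b * z^2)) \<partial>gauss \<sigma>)
      = (\<integral>\<^sup>+z. ennreal (normal_density 0 \<sigma> z) * ennreal (exp (b * z^2)) \<partial>lborel)"
    unfolding gauss_def by (subst nn_integral_density) auto
  also have "\<dots> \<le> (\<integral>\<^sup>+z. ennreal (sqrt 2 * normal_density 0 (sqrt 2 * \<sigma>) z) \<partial>lborel)"
  proof (intro nn_integral_mono)
    fix z :: real
    have "b * z^2 \<le> (1 / (4 * \<sigma>^2)) * z^2"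
      using b by (intro mult_right_mono) auto
    then have "exp (b * z^2) \<le> exp (z^2 / (4 * \<sigma>^2))" by simp
    then have "normal_density 0 \<sigma> z * exp (b * z^2) \<le> normal_density 0 \<sigma> z * exp (z^2 / (4 * \<sigma>^2))"
      by (intro mult_left_mono) auto
    also have "\<dots> = sqrt 2 * normal_density 0 (sqrt 2 * \<sigma>) z"
      using s by (rule nd_identity)
    finally show "ennreal (normal_density 0 \<sigma> z) * ennreal (exp (b * z^2)) \<le> ennreal (sqrt 2 * normal_density 0 (sqrt 2 * \<sigma>) z)"
      by (simp add: ennreal_mult[symmetric] ennreal_leI)
  qed
  also have "\<dots> = ennreal (sqrt 2) * (\<integral>\<^sup>+z. ennreal (normal_density 0 (sqrt 2 * \<sigma>) z) \<partial>lborel)"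
    by (subst ennreal_mult) (auto intro!: nn_integral_cmult)
  also have "(\<integral>\<^sup>+z. ennreal (normal_density 0 (sqrt 2 * \<sigma>) z) \<partial>lborel) = 1"
  proof -
    have "sqrt 2 * \<sigma> > 0" using s by simp
    from prob_space.emeasure_space_1[OF prob_space_normal_density[OF this, of 0]]
    show ?thesis by (simp add: emeasure_density)
  qed
  finally show ?thesis by simp
qed




lemma sel_mgf:
  fixes a :: real
  assumes Q: "finite Q" "Q \<noteq> {}" and c: "c > 0" and eta: "0 \<le> \<eta>" "\<eta> \<le> c" and a: "0 \<le> a"
  shows "ennreal (1 - a * card Q) \<le>
    (\<integral>\<^sup>+q. ennreal (1 - a * exp (\<eta> * (Max (s ` Q) - s q))) \<partial>measure_pmf (select mech c Q s))"
proof (rule one_minus_nn_integral)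
  show "prob_space (measure_pmf (select mech c Q s))" by (rule measure_pmf.prob_space_axioms)
  show "(\<lambda>q. a * exp (\<eta> * (Max (s ` Q) - s q))) \<in> borel_measurable (measure_pmf (select mech c Q s))"
    by simp
  show "\<And>x. 0 \<le> a * exp (\<eta> * (Max (s ` Q) - s x))" using a by simp
  show "0 \<le> a * real (card Q)" using a by simp
  have "(\<integral>\<^sup>+q. ennreal (a * exp (\<eta> * (Max (s ` Q) - s q))) \<partial>measure_pmf (select mech c Q s))
     = (\<integral>\<^sup>+q. ennreal (pmf (select mech c Q s) q) * ennreal (a * exp (\<eta> * (Max (s ` Q) - s q))) \<partial>count_space UNIV)"
    by (rule nn_integral_measure_pmf)
  also have "\<dots> \<le> (\<integral>\<^sup>+q. ennreal (if q \<in> Q then a else 0) \<partial>count_space UNIV)"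
  proof (intro nn_integral_mono)
    fix q
    have pb: "pmf (select mech c Q s) q \<le> (if q \<in> Q then exp (- c * (Max (s ` Q) - s q)) else 0)"
      by (rule select_pmf[OF Q c])
    show "ennreal (pmf (select mech c Q s) q) * ennreal (a * exp (\<eta> * (Max (s ` Q) - s q))) \<le> ennreal (if q \<in> Q then a else 0)"
    proof (cases "q \<in> Q")
      case True
      have g: "0 \<le> Max (s ` Q) - s q" using Q True by auto
      have "pmf (select mech c Q s) q * (a * exp (\<eta> * (Max (s ` Q) - s q)))
          \<le> exp (- c * (Max (s ` Q) - s q)) * (a * exp (\<eta> * (Max (s ` Q) - s q)))"
        using pb True a by (intro mult_right_mono) auto
      also have "\<dots> = a * exp ((\<eta> - c) * (Max (s ` Q) - s q))"
        by (simp add: exp_add[symmetric] algebra_simps)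
      also have "\<dots> \<le> a * 1"
        using g eta a by (intro mult_left_mono) (auto simp: mult_nonpos_nonneg)
      finally have "pmf (select mech c Q s) q * (a * exp (\<eta> * (Max (s ` Q) - s q))) \<le> a" by simp
      then show ?thesis using True by (subst ennreal_mult'[symmetric]) (auto intro: ennreal_leI)
    next
      case False
      then have "pmf (select mech c Q s) q = 0" using pb by (metis pmf_nonneg order_antisym)
      then show ?thesis by simp
    qed
  qed
  also have "\<dots> = (\<Sum>q\<in>Q. ennreal a)"
    using Q by (subst nn_integral_count_space'[of Q]) auto
  also have "\<dots> = ennreal (a * card Q)" using a by (simp add: ennreal_mult' mult.commute ennreal_of_nat_eq_real_of_nat)
  finally show "(\<integral>\<^sup>+q. ennreal (a * exp (\<eta> * (Max (s ` Q) - s q))) \<partial>measure_pmf (select mech c Q s)) \<le> ennreal (a * card Q)" .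
qed

lemma gauss_step:
  assumes s: "\<sigma> > 0" and b: "0 \<le> b" "b \<le> 1 / (4 * \<sigma>^2)" and a: "0 \<le> a"
  shows "ennreal (1 - a * sqrt 2) \<le> (\<integral>\<^sup>+z. ennreal (1 - a * exp (b * z^2)) \<partial>gauss \<sigma>)"
proof (rule one_minus_nn_integral)
  show "prob_space (gauss \<sigma>)" using s by (rule gauss_prob)
  show "(\<lambda>z. a * exp (b * z^2)) \<in> borel_measurable (gauss \<sigma>)"
    by (simp add: measurable_cong_sets[OF sets_gauss refl])
  show "\<And>x. 0 \<le> a * exp (b * x^2)" using a by simp
  show "0 \<le> a * sqrt 2" using a by simp
  have "(\<integral>\<^sup>+z. ennreal (a * exp (b * z^2)) \<partial>gauss \<sigma>) = ennreal a * (\<integral>\<^sup>+z. ennreal (exp (b * z^2)) \<partial>gauss \<sigma>)"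
    using a by (subst ennreal_mult) (auto intro!: nn_integral_cmult simp: measurable_cong_sets[OF sets_gauss refl])
  also have "\<dots> \<le> ennreal a * ennreal (sqrt 2)"
    by (intro mult_left_mono gauss_mgf_sq[OF s b]) auto
  finally show "(\<integral>\<^sup>+z. ennreal (a * exp (b * z^2)) \<partial>gauss \<sigma>) \<le> ennreal (a * sqrt 2)"
    using a by (simp add: ennreal_mult)
qed




definition valid :: "'a set \<Rightarrow> ('a \<Rightarrow> real) \<Rightarrow> bool" where
  "valid S A \<longleftrightarrow> (\<forall>x\<in>S. 0 < A x) \<and> (\<Sum>x\<in>S. A x) = 1 \<and> (\<forall>x. x \<notin> S \<longrightarrow> A x = 0)"

definition xent :: "'a set \<Rightarrow> ('a \<Rightarrow> real) \<Rightarrow> ('a \<Rightarrow> real) \<Rightarrow> real" where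
  "xent S \<mu> A = - (\<Sum>x\<in>S. \<mu> x * ln (A x))"

lemma exp_quad: fixes y :: real assumes "\<bar>y\<bar> \<le> 1" shows "exp y \<le> 1 + y + y^2"
proof (cases "y \<ge> 0")
  case True then show ?thesis using assms exp_bound by auto
next
  case False
  define t where "t = - y"
  have t: "0 < t" "t \<le> 1" using False assms by (auto simp: t_def)
  have "exp y = 1 / exp t" by (simp add: t_def exp_minus field_simps)
  also have "\<dots> \<le> 1 / (1 + t)" using t by (intro divide_left_mono exp_ge_add_one_self) auto
  also have "\<dots> \<le> 1 - t + t^2"
  proof -
    have "1 \<le> (1 + t) * (1 - t + t^2)" using t by (simp add: algebra_simps power2_eq_square power3_eq_cube)
    then show ?thesis using t by (simp add: divide_simps mult.commute)
  qed
  finally show ?thesis by (simp add: t_def)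
qed

lemma valid_mw:
  assumes S: "finite S" "S \<noteq> {}" and A: "valid S A"
  shows "valid S (mw_update S A q a)"
proof -
  define e where "e = (\<lambda>x. exp (q x * (a - qdist q S A) / 2))"
  define Z where "Z = (\<Sum>y\<in>S. A y * e y)"
  have Zp: "Z > 0" unfolding Z_def using S A by (intro sum_pos) (auto simp: valid_def e_def)
  have mw: "mw_update S A q a = (\<lambda>x. A x * e x / Z)" unfolding mw_update_def e_def Z_def by simp
  show ?thesis unfolding mw valid_def using A Zp
    by (auto simp: valid_def e_def sum_divide_distrib[symmetric] Z_def)
qed

lemma qdist_bounds:
  assumes "valid S A" "finite S" "\<forall>x\<in>S. 0 \<le> q x \<and> q x \<le> 1"
  shows "0 \<le> qdist q S A" "qdist q S A \<le> 1"
proof -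
  have "qdist q S A \<le> (\<Sum>x\<in>S. A x * 1)" unfolding qdist_def using assms
    by (intro sum_mono mult_left_mono) (auto simp: valid_def less_imp_le)
  then show "qdist q S A \<le> 1" using assms by (simp add: valid_def)
  show "0 \<le> qdist q S A" unfolding qdist_def using assms
    by (intro sum_nonneg mult_nonneg_nonneg) (auto simp: valid_def less_imp_le)
qed

lemma drop_formula:
  assumes S: "finite S" "S \<noteq> {}" and A: "valid S A"
    and mu: "(\<Sum>x\<in>S. \<mu> x) = 1"
  shows "xent S \<mu> A - xent S \<mu> (mw_update S A q a) = (a - qdist q S A) / 2 * qdist q S \<mu> - ln (\<Sum>y\<in>S. A y * exp (q y * (a - qdist q S A) / 2))"
proof -
  define r where "r = a - qdist q S A"
  define Z where "Z = (\<Sum>y\<in>S. A y * exp (q y * r / 2))"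
  have Zp: "Z > 0" unfolding Z_def using S A by (intro sum_pos) (auto simp: valid_def)
  have mw: "mw_update S A q a = (\<lambda>x. A x * exp (q x * r / 2) / Z)"
    unfolding mw_update_def Z_def r_def by simp
  have l: "ln (mw_update S A q a x) = ln (A x) + q x * r / 2 - ln Z" if "x \<in> S" for x
  proof -
    have "A x > 0" using that A by (auto simp: valid_def)
    then show ?thesis using Zp unfolding mw by (simp add: ln_div ln_mult)
  qed
  have "xent S \<mu> (mw_update S A q a) = - (\<Sum>x\<in>S. \<mu> x * ln (A x) + \<mu> x * (q x * r / 2) - \<mu> x * ln Z)"
    unfolding xent_def by (intro arg_cong[where f=uminus] sum.cong) (auto simp: l algebra_simps)
  also have "\<dots> = xent S \<mu> A - r / 2 * qdist q S \<mu> + ln Z"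
  proof -
    have a1: "(\<Sum>x\<in>S. \<mu> x * (q x * r / 2)) = r / 2 * qdist q S \<mu>"
      unfolding qdist_def by (simp add: sum_distrib_left algebra_simps)
    have a2: "(\<Sum>x\<in>S. \<mu> x * ln Z) = ln Z" using mu by (simp add: sum_distrib_right[symmetric])
    show ?thesis unfolding xent_def sum_subtractf sum.distrib a1 a2 by simp
  qed
  finally show ?thesis by (simp add: r_def Z_def)
qed

lemma lnZ_bound:
  assumes S: "finite S" "S \<noteq> {}" and A: "valid S A" and q: "\<forall>x\<in>S. 0 \<le> q x \<and> q x \<le> 1"
    and r: "\<bar>r\<bar> \<le> 1"
  shows "ln (\<Sum>y\<in>S. A y * exp (q y * r / 2)) \<le> r / 2 * qdist q S A + r^2 / 4"
proof -
  have Zp: "(\<Sum>y\<in>S. A y * exp (q y * r / 2)) > 0" using S A by (intro sum_pos) (auto simp: valid_def)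
  have pt: "A y * exp (q y * r / 2) \<le> A y * (1 + r / 2 * q y + r^2 / 4)" if y: "y \<in> S" for y
  proof -
    have qy: "0 \<le> q y" "q y \<le> 1" using q y by auto
    have ab: "\<bar>q y * r / 2\<bar> \<le> 1" using qy r by (auto simp: abs_mult intro: order_trans[OF mult_left_le_one_le])
    have sq: "(q y * r / 2)^2 \<le> r^2 / 4"
    proof -
      have "(q y)^2 \<le> 1" using qy by (simp add: power_le_one)
      then have "(q y)^2 * r^2 \<le> 1 * r^2" by (intro mult_right_mono) auto
      then show ?thesis by (simp add: power_mult_distrib power_divide)
    qed
    have "exp (q y * r / 2) \<le> 1 + q y * r / 2 + (q y * r / 2)^2" by (rule exp_quad[OF ab])
    also have "\<dots> \<le> 1 + r / 2 * q y + r^2 / 4"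
    proof -
      have "q y * r / 2 = r / 2 * q y" by simp
      then show ?thesis using sq by linarith
    qed
    finally show ?thesis using A y by (intro mult_left_mono) (auto simp: valid_def)
  qed
  have "(\<Sum>y\<in>S. A y * exp (q y * r / 2)) \<le> (\<Sum>y\<in>S. A y * (1 + r / 2 * q y + r^2 / 4))"
    by (intro sum_mono pt)
  also have "\<dots> = 1 + r / 2 * qdist q S A + r^2 / 4"
    using A unfolding qdist_def
    by (simp add: algebra_simps sum.distrib sum_distrib_left sum_distrib_right[symmetric] valid_def)
  finally have Zle: "(\<Sum>y\<in>S. A y * exp (q y * r / 2)) \<le> 1 + r / 2 * qdist q S A + r^2 / 4" .
  have "ln (\<Sum>y\<in>S. A y * exp (q y * r / 2)) \<le> (\<Sum>y\<in>S. A y * exp (q y * r / 2)) - 1"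
    by (rule ln_le_minus_one[OF Zp])
  then show ?thesis using Zle by simp
qed

lemma alg_ineq:
  fixes d w \<delta> f \<rho> :: real
  assumes rho: "\<rho> > 0" and del: "\<bar>\<delta>\<bar> \<le> f"
  shows "\<bar>d\<bar> - (1 / (4 * \<rho>) + 6 * \<rho> * f^2) - 8 * \<rho> * ((d + w) / 2 * (d + \<delta>) - (d + w)^2 / 4) \<le> 4 * \<rho> * w^2"
proof -
  have h1: "\<bar>d\<bar> - 1 / (4 * \<rho>) \<le> \<rho> * d^2"
  proof -
    have "0 \<le> (2 * \<rho> * \<bar>d\<bar> - 1)^2" by simp
    then have "0 \<le> 4 * \<rho>^2 * d^2 - 4 * \<rho> * \<bar>d\<bar> + 1" by (simp add: power2_eq_square algebra_simps)
    then have "4 * \<rho> * \<bar>d\<bar> - 1 \<le> 4 * \<rho> * (\<rho> * d^2)" by (simp add: power2_eq_square algebra_simps)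
    then show ?thesis using rho by (simp add: field_simps)
  qed
  have "\<bar>\<delta>\<bar>^2 \<le> f^2" by (rule power_mono[OF del abs_ge_zero])
  then have d2: "\<delta>^2 \<le> f^2" by simp
  have h2: "- 4 * \<rho> * d * \<delta> \<le> \<rho> * d^2 + 4 * \<rho> * \<delta>^2"
  proof -
    have "0 \<le> \<rho> * (d + 2 * \<delta>)^2" using rho by simp
    then show ?thesis by (simp add: power2_eq_square algebra_simps)
  qed
  have h3: "- 4 * \<rho> * w * \<delta> \<le> 2 * \<rho> * w^2 + 2 * \<rho> * \<delta>^2"
  proof -
    have "0 \<le> 2 * \<rho> * (w + \<delta>)^2" using rho by simp
    then show ?thesis by (simp add: power2_eq_square algebra_simps)
  qed
  have h4: "6 * \<rho> * \<delta>^2 \<le> 6 * \<rho> * f^2" using d2 rho by simp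
  have "8 * \<rho> * ((d + w) / 2 * (d + \<delta>) - (d + w)^2 / 4) = 2 * \<rho> * d^2 + 4 * \<rho> * d * \<delta> + 4 * \<rho> * w * \<delta> - 2 * \<rho> * w^2"
    by (simp add: power2_eq_square field_simps)
  then show ?thesis using h1 h2 h3 h4 by linarith
qed




definition Merr :: "'a list \<Rightarrow> 'a set \<Rightarrow> ('a \<Rightarrow> real) set \<Rightarrow> ('a \<Rightarrow> real) \<Rightarrow> real" where
  "Merr D S Q A = Max ((\<lambda>q. \<bar>qdist q S A - qdata q D\<bar>) ` Q)"

lemma clip01_bounds: "0 \<le> clip01 a" "clip01 a \<le> 1"
  by (auto simp: clip01_def)

lemma clip01_close: assumes "0 \<le> c" "c \<le> 1" shows "\<bar>clip01 (c + z) - c\<bar> \<le> \<bar>z\<bar>"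
  using assms by (auto simp: clip01_def)

lemma step_ineq:
  assumes S: "finite S" "S \<noteq> {}" and A: "valid S A" and q: "\<forall>x\<in>S. 0 \<le> q x \<and> q x \<le> 1"
    and qD: "0 \<le> qdata q D" "qdata q D \<le> 1"
    and mu: "(\<Sum>x\<in>S. \<mu> x) = 1" "\<bar>qdist q S \<mu> - qdata q D\<bar> \<le> f"
    and rho: "\<rho> > 0"
  shows "\<bar>qdist q S A - qdata q D\<bar> - (1 / (4 * \<rho>) + 6 * \<rho> * f^2)
      - 8 * \<rho> * (xent S \<mu> A - xent S \<mu> (mw_update S A q (clip01 (qdata q D + z)))) \<le> 4 * \<rho> * z^2"
proof -
  define a where "a = clip01 (qdata q D + z)"
  define qA where "qA = qdist q S A"
  define qM where "qM = qdist q S \<mu>"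
  define qd where "qd = qdata q D"
  define r where "r = a - qA"
  have qA: "0 \<le> qA" "qA \<le> 1" unfolding qA_def using qdist_bounds[OF A S(1) q] by auto
  have a01: "0 \<le> a" "a \<le> 1" unfolding a_def by (rule clip01_bounds)+
  have r1: "\<bar>r\<bar> \<le> 1" unfolding r_def using qA a01 by auto
  have drop: "xent S \<mu> A - xent S \<mu> (mw_update S A q a) = r / 2 * qM - ln (\<Sum>y\<in>S. A y * exp (q y * r / 2))"
    unfolding r_def qM_def qA_def by (rule drop_formula[OF S A mu(1)])
  have lz: "ln (\<Sum>y\<in>S. A y * exp (q y * r / 2)) \<le> r / 2 * qA + r^2 / 4"
    unfolding qA_def by (rule lnZ_bound[OF S A q r1])
  have dropge: "(r / 2) * (qM - qA) - r^2 / 4 \<le> xent S \<mu> A - xent S \<mu> (mw_update S A q a)"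
  proof -
    have "r / 2 * (qM - qA) = r / 2 * qM - r / 2 * qA" by (simp add: right_diff_distrib)
    then show ?thesis using drop lz by linarith
  qed
  define d where "d = qd - qA"
  define w where "w = a - qd"
  define \<delta> where "\<delta> = qM - qd"
  have rdw: "r = d + w" "qM - qA = d + \<delta>" unfolding r_def d_def w_def \<delta>_def by auto
  have del: "\<bar>\<delta>\<bar> \<le> f" using mu(2) unfolding \<delta>_def qM_def qd_def .
  have wz: "\<bar>w\<bar> \<le> \<bar>z\<bar>" unfolding w_def a_def qd_def using clip01_close[OF qD] .
  have wz2: "w^2 \<le> z^2" using wz by (metis abs_ge_zero power2_abs power_mono)
  have key: "\<bar>d\<bar> - (1 / (4 * \<rho>) + 6 * \<rho> * f^2) - 8 * \<rho> * ((d + w) / 2 * (d + \<delta>) - (d + w)^2 / 4) \<le> 4 * \<rho> * w^2"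
    by (rule alg_ineq[OF rho del])
  have "8 * \<rho> * ((d + w) / 2 * (d + \<delta>) - (d + w)^2 / 4) \<le> 8 * \<rho> * (xent S \<mu> A - xent S \<mu> (mw_update S A q a))"
    using dropge rho unfolding rdw by (intro mult_left_mono) auto
  moreover have "\<bar>qdist q S A - qdata q D\<bar> = \<bar>d\<bar>" unfolding d_def qA_def qd_def by simp
  moreover have "4 * \<rho> * w^2 \<le> 4 * \<rho> * z^2" using wz2 rho by simp
  ultimately show ?thesis using key unfolding a_def by linarith
qed

lemma valid_le1: assumes "valid S A" "finite S" "x \<in> S" shows "A x \<le> 1"
proof -
  have "A x \<le> (\<Sum>y\<in>S. A y)" using assms by (intro member_le_sum) (auto simp: valid_def less_imp_le)
  then show ?thesis using assms by (simp add: valid_def)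
qed

lemma xent_nonneg:
  assumes "valid S A" "finite S" "\<forall>x\<in>S. 0 \<le> \<mu> x"
  shows "0 \<le> xent S \<mu> A"
proof -
  have "(\<Sum>x\<in>S. \<mu> x * ln (A x)) \<le> 0"
  proof (intro sum_nonpos)
    fix x assume x: "x \<in> S"
    have "0 < A x" "A x \<le> 1" using assms x valid_le1[of S A x] by (auto simp: valid_def)
    then have "ln (A x) \<le> 0" by simp
    then show "\<mu> x * ln (A x) \<le> 0" using assms x by (simp add: mult_nonneg_nonpos)
  qed
  then show ?thesis unfolding xent_def by simp
qed




lemma pmw_claim:
  fixes mech D S Q e0 E T \<eta> \<rho> a0 \<tau> \<mu> f
  assumes S: "finite S" "S \<noteq> {}" and Q: "finite Q" "Q \<noteq> {}"
    and qb: "\<forall>q\<in>Q. \<forall>x\<in>S. 0 \<le> q x \<and> q x \<le> 1"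
    and qD: "\<forall>q\<in>Q. 0 \<le> qdata q D \<and> qdata q D \<le> 1"
    and Dn: "D \<noteq> []" and e0: "e0 > 0"
    and eta: "0 \<le> \<eta>" "\<eta> \<le> e0 * real (length D) / 2"
    and rho: "\<rho> > 0" "4 * \<eta> * \<rho> \<le> (real (length D) * e0)^2 / 4"
    and mu: "\<forall>x\<in>S. 0 \<le> \<mu> x" "(\<Sum>x\<in>S. \<mu> x) = 1" "\<forall>q\<in>Q. \<bar>qdist q S \<mu> - qdata q D\<bar> \<le> f"
    and a0: "a0 = 1 / (4 * \<rho>) + 6 * \<rho> * f^2"
    and E: "\<And>hist. length hist = T \<Longrightarrow> (\<forall>B\<in>set hist. valid S B) \<Longrightarrow>
              sum_list (map (Merr D S Q) hist) \<le> \<tau> \<Longrightarrow> E hist"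
  shows "length hist + k = T \<Longrightarrow> valid S A \<Longrightarrow> (\<forall>B\<in>set hist. valid S B) \<Longrightarrow>
    ennreal (1 - (sqrt 2 * card Q)^k * exp (\<eta> * (sum_list (map (Merr D S Q) hist) + 8 * \<rho> * xent S \<mu> A + k * a0 - \<tau>)))
      \<le> pmw_succ mech D S Q e0 E k A hist"
proof (induction k arbitrary: A hist)
  case 0
  show ?case
  proof (cases "E hist")
    case True then show ?thesis by simp
  next
    case False
    then have h1: "\<not> sum_list (map (Merr D S Q) hist) \<le> \<tau>" using E 0 by auto
    have "0 \<le> xent S \<mu> A" using xent_nonneg[OF 0(2) S(1) mu(1)] .
    then have h2: "0 \<le> 8 * \<rho> * xent S \<mu> A" using rho by simp
    have "0 \<le> \<eta> * (sum_list (map (Merr D S Q) hist) + 8 * \<rho> * xent S \<mu> A + 0 * a0 - \<tau>)"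
      using eta h1 h2 by (intro mult_nonneg_nonneg) auto
    then have "1 \<le> exp (\<eta> * (sum_list (map (Merr D S Q) hist) + 8 * \<rho> * xent S \<mu> A + 0 * a0 - \<tau>))"
      by simp
    then show ?thesis using False by (simp add: ennreal_neg)
  qed
next
  case (Suc k)
  define K where "K = sqrt 2 * card Q"
  define Sh where "Sh = sum_list (map (Merr D S Q) hist)"
  define n where "n = real (length D)"
  define c where "c = e0 * n / 2"
  define sc where "sc = (\<lambda>q. \<bar>qdist q S A - qdata q D\<bar>)"
  define gap where "gap = (\<lambda>q. Max (sc ` Q) - sc q)"
  define W where "W = K^k * exp (\<eta> * (Sh + 8 * \<rho> * xent S \<mu> A + real (Suc k) * a0 - \<tau>))"
  define Ap where "Ap = (\<lambda>q z. mw_update S A q (clip01 (qdata q D + z)))"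
  have npos: "n > 0" unfolding n_def using Dn by simp
  have cpos: "c > 0" unfolding c_def using npos e0 by simp
  have W0: "0 \<le> W" unfolding W_def K_def by simp
  have MA: "Merr D S Q A = Max (sc ` Q)" unfolding Merr_def sc_def ..
  have pt: "ennreal (1 - W * exp (\<eta> * gap q) * exp ((4 * \<eta> * \<rho>) * z^2)) \<le> pmw_succ mech D S Q e0 E k (Ap q z) (hist @ [A])"
    if q: "q \<in> Q" for q z
  proof -
    have vA': "valid S (Ap q z)" unfolding Ap_def by (rule valid_mw[OF S Suc.prems(2)])
    have IH: "ennreal (1 - K^k * exp (\<eta> * (sum_list (map (Merr D S Q) (hist @ [A])) + 8 * \<rho> * xent S \<mu> (Ap q z) + k * a0 - \<tau>)))
      \<le> pmw_succ mech D S Q e0 E k (Ap q z) (hist @ [A])"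
      unfolding K_def using Suc.prems vA' by (intro Suc.IH) auto
    have si: "sc q - a0 - 8 * \<rho> * (xent S \<mu> A - xent S \<mu> (Ap q z)) \<le> 4 * \<rho> * z^2"
      unfolding sc_def Ap_def a0 using q qb qD mu rho
      by (intro step_ineq[OF S Suc.prems(2)]) auto
    have "\<eta> * (Sh + Merr D S Q A + 8 * \<rho> * xent S \<mu> (Ap q z) + k * a0 - \<tau>)
        \<le> \<eta> * (Sh + 8 * \<rho> * xent S \<mu> A + real (Suc k) * a0 - \<tau>) + \<eta> * gap q + (4 * \<eta> * \<rho>) * z^2"
    proof -
      have "Sh + Merr D S Q A + 8 * \<rho> * xent S \<mu> (Ap q z) + k * a0 - \<tau>
          \<le> (Sh + 8 * \<rho> * xent S \<mu> A + real (Suc k) * a0 - \<tau>) + gap q + 4 * \<rho> * z^2"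
        using si unfolding gap_def MA by (simp add: algebra_simps)
      then have "\<eta> * (Sh + Merr D S Q A + 8 * \<rho> * xent S \<mu> (Ap q z) + k * a0 - \<tau>)
          \<le> \<eta> * ((Sh + 8 * \<rho> * xent S \<mu> A + real (Suc k) * a0 - \<tau>) + gap q + 4 * \<rho> * z^2)"
        using eta by (intro mult_left_mono) auto
      then show ?thesis by (simp add: algebra_simps)
    qed
    then have "K^k * exp (\<eta> * (Sh + Merr D S Q A + 8 * \<rho> * xent S \<mu> (Ap q z) + k * a0 - \<tau>))
        \<le> K^k * exp (\<eta> * (Sh + 8 * \<rho> * xent S \<mu> A + real (Suc k) * a0 - \<tau>) + \<eta> * gap q + (4 * \<eta> * \<rho>) * z^2)"
      unfolding K_def by (intro mult_left_mono) auto
    also have "\<dots> = W * exp (\<eta> * gap q) * exp ((4 * \<eta> * \<rho>) * z^2)"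
      unfolding W_def by (simp add: exp_add)
    finally have "ennreal (1 - W * exp (\<eta> * gap q) * exp ((4 * \<eta> * \<rho>) * z^2))
       \<le> ennreal (1 - K^k * exp (\<eta> * (sum_list (map (Merr D S Q) (hist @ [A])) + 8 * \<rho> * xent S \<mu> (Ap q z) + k * a0 - \<tau>)))"
      unfolding Sh_def by (intro ennreal_leI) (simp add: algebra_simps)
    then show ?thesis using IH by (rule order_trans)
  qed
  have sig: "1 / (real (length D) * e0) > 0" using npos e0 unfolding n_def by simp
  have bb: "4 * \<eta> * \<rho> \<le> 1 / (4 * (1 / (real (length D) * e0))^2)"
    using rho(2) npos e0 unfolding n_def by (simp add: power_divide field_simps)
  have b0: "0 \<le> 4 * \<eta> * \<rho>" using eta rho by simp
  have gz: "ennreal (1 - W * sqrt 2 * exp (\<eta> * gap q))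
      \<le> (\<integral>\<^sup>+z. pmw_succ mech D S Q e0 E k (Ap q z) (hist @ [A]) \<partial>gauss (1 / (real (length D) * e0)))"
    if q: "q \<in> Q" for q
  proof -
    have "ennreal (1 - W * exp (\<eta> * gap q) * sqrt 2)
      \<le> (\<integral>\<^sup>+z. ennreal (1 - W * exp (\<eta> * gap q) * exp ((4 * \<eta> * \<rho>) * z^2)) \<partial>gauss (1 / (real (length D) * e0)))"
      using W0 by (intro gauss_step[OF sig b0 bb]) auto
    also have "\<dots> \<le> (\<integral>\<^sup>+z. pmw_succ mech D S Q e0 E k (Ap q z) (hist @ [A]) \<partial>gauss (1 / (real (length D) * e0)))"
      by (intro nn_integral_mono pt[OF q])
    finally show ?thesis by (simp add: mult_ac)
  qed
  have setQ: "set_pmf (select mech c Q sc) \<subseteq> Q"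
  proof
    fix q assume "q \<in> set_pmf (select mech c Q sc)"
    then have "pmf (select mech c Q sc) q \<noteq> 0" by (simp add: set_pmf_eq)
    with select_pmf[OF Q cpos, of mech sc q] show "q \<in> Q" by (auto split: if_splits)
  qed
  have "ennreal (1 - K^(Suc k) * exp (\<eta> * (Sh + 8 * \<rho> * xent S \<mu> A + real (Suc k) * a0 - \<tau>)))
      = ennreal (1 - (W * sqrt 2) * card Q)"
    unfolding W_def K_def by (simp add: algebra_simps)
  also have "\<dots> \<le> (\<integral>\<^sup>+q. ennreal (1 - (W * sqrt 2) * exp (\<eta> * (Max (sc ` Q) - sc q))) \<partial>measure_pmf (select mech c Q sc))"
    by (rule sel_mgf[OF Q cpos]) (use W0 eta in \<open>auto simp: c_def n_def\<close>)
  also have "\<dots> \<le> (\<integral>\<^sup>+q. (\<integral>\<^sup>+z. pmw_succ mech D S Q e0 E k (Ap q z) (hist @ [A]) \<partial>gauss (1 / (real (length D) * e0))) \<partial>measure_pmf (select mech c Q sc))"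
    using setQ gz unfolding gap_def by (intro nn_integral_mono_AE) (auto simp: AE_measure_pmf_iff)
  also have "\<dots> = pmw_succ mech D S Q e0 E (Suc k) A hist"
    unfolding Ap_def c_def n_def sc_def by (simp add: mult_ac)
  finally show ?case unfolding K_def Sh_def by simp
qed




lemma sum_swap_list:
  fixes g :: "'a \<Rightarrow> real" and hist :: "('a \<Rightarrow> real) list"
  shows "(\<Sum>x\<in>S. (\<Sum>B\<leftarrow>hist. B x) * g x) = (\<Sum>B\<leftarrow>hist. \<Sum>x\<in>S. B x * g x)"
  by (induction hist) (auto simp: sum.distrib distrib_right)

lemma sum_list_pos_list: "hist \<noteq> [] \<Longrightarrow> \<forall>B\<in>set hist. 0 < (B x::real) \<Longrightarrow> 0 < (\<Sum>B\<leftarrow>hist. B x)"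
proof (induction hist)
  case Nil then show ?case by simp
next
  case (Cons B hist)
  then show ?case by (cases "hist = []") (auto intro: add_pos_pos)
qed

lemma sum_list_ones: "(\<Sum>B\<leftarrow>hist. (1::real)) = real (length hist)"
  by (induction hist) auto

lemma avg_valid:
  assumes S: "finite S" and h: "hist \<noteq> []" and v: "\<forall>B\<in>set hist. valid S B"
  shows "valid S (\<lambda>x. (\<Sum>B\<leftarrow>hist. B x) / real (length hist))"
proof -
  have pos: "\<forall>x\<in>S. 0 < (\<Sum>B\<leftarrow>hist. B x) / real (length hist)"
    using v h by (auto intro!: divide_pos_pos sum_list_pos_list simp: valid_def)
  have "(\<Sum>x\<in>S. (\<Sum>B\<leftarrow>hist. B x) / real (length hist)) = (\<Sum>x\<in>S. (\<Sum>B\<leftarrow>hist. B x) * 1) / real (length hist)"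
    by (simp add: sum_divide_distrib)
  also have "(\<Sum>x\<in>S. (\<Sum>B\<leftarrow>hist. B x) * 1) = (\<Sum>B\<leftarrow>hist. \<Sum>x\<in>S. B x * 1)" by (rule sum_swap_list)
  also have "\<dots> = (\<Sum>B\<leftarrow>hist. (1::real))"
    using v by (intro arg_cong[where f=sum_list] map_cong) (auto simp: valid_def)
  also have "\<dots> = real (length hist)" by (rule sum_list_ones)
  finally have s1: "(\<Sum>x\<in>S. (\<Sum>B\<leftarrow>hist. B x) / real (length hist)) = 1" using h by simp
  have z: "\<forall>x. x \<notin> S \<longrightarrow> (\<Sum>B\<leftarrow>hist. B x) / real (length hist) = 0"
  proof (intro allI impI)
    fix x assume "x \<notin> S"
    then have "(\<Sum>B\<leftarrow>hist. B x) = (\<Sum>B\<leftarrow>hist. (0::real))"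
      using v by (intro arg_cong[where f=sum_list] map_cong) (auto simp: valid_def)
    then show "(\<Sum>B\<leftarrow>hist. B x) / real (length hist) = 0" by simp
  qed
  show ?thesis unfolding valid_def using pos s1 z by blast
qed

lemma qdist_avg:
  "qdist q S (\<lambda>x. (\<Sum>B\<leftarrow>hist. B x) / real (length hist)) = (\<Sum>B\<leftarrow>hist. qdist q S B) / real (length hist)"
proof -
  have "qdist q S (\<lambda>x. (\<Sum>B\<leftarrow>hist. B x) / real (length hist)) = (\<Sum>x\<in>S. (\<Sum>B\<leftarrow>hist. B x) * q x) / real (length hist)"
    unfolding qdist_def by (simp add: sum_divide_distrib)
  also have "(\<Sum>x\<in>S. (\<Sum>B\<leftarrow>hist. B x) * q x) = (\<Sum>B\<leftarrow>hist. qdist q S B)"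
    unfolding qdist_def by (rule sum_swap_list)
  finally show ?thesis .
qed

lemma abs_sum_list_bound:
  fixes f g :: "'b \<Rightarrow> real"
  assumes "\<forall>B\<in>set xs. \<bar>f B - c\<bar> \<le> g B"
  shows "\<bar>(\<Sum>B\<leftarrow>xs. f B) - real (length xs) * c\<bar> \<le> (\<Sum>B\<leftarrow>xs. g B)"
  using assms
proof (induction xs)
  case Nil then show ?case by simp
next
  case (Cons B xs)
  have "\<bar>(\<Sum>B\<leftarrow>B # xs. f B) - real (length (B # xs)) * c\<bar> = \<bar>(f B - c) + ((\<Sum>B\<leftarrow>xs. f B) - real (length xs) * c)\<bar>"
    by (simp add: algebra_simps)
  also have "\<dots> \<le> \<bar>f B - c\<bar> + \<bar>(\<Sum>B\<leftarrow>xs. f B) - real (length xs) * c\<bar>" by (rule abs_triangle_ineq)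
  also have "\<dots> \<le> g B + (\<Sum>B\<leftarrow>xs. g B)" using Cons by (intro add_mono) auto
  finally show ?case by simp
qed

lemma Merr_ge: "finite Q \<Longrightarrow> q \<in> Q \<Longrightarrow> \<bar>qdist q S A - qdata q D\<bar> \<le> Merr D S Q A"
  unfolding Merr_def by (rule Max_ge) auto

lemma avg_err:
  assumes Q: "finite Q" "Q \<noteq> {}" and h: "hist \<noteq> []"
  shows "Max ((\<lambda>q. \<bar>qdist q S (\<lambda>x. (\<Sum>B\<leftarrow>hist. B x) / real (length hist)) - qdata q D\<bar>) ` Q)
     \<le> (\<Sum>B\<leftarrow>hist. Merr D S Q B) / real (length hist)"
proof (rule Max.boundedI)
  show "finite ((\<lambda>q. \<bar>qdist q S (\<lambda>x. (\<Sum>B\<leftarrow>hist. B x) / real (length hist)) - qdata q D\<bar>) ` Q)" using Q by simp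
  show "(\<lambda>q. \<bar>qdist q S (\<lambda>x. (\<Sum>B\<leftarrow>hist. B x) / real (length hist)) - qdata q D\<bar>) ` Q \<noteq> {}" using Q by simp
  fix a assume "a \<in> (\<lambda>q. \<bar>qdist q S (\<lambda>x. (\<Sum>B\<leftarrow>hist. B x) / real (length hist)) - qdata q D\<bar>) ` Q"
  then obtain q where q: "q \<in> Q" and a: "a = \<bar>qdist q S (\<lambda>x. (\<Sum>B\<leftarrow>hist. B x) / real (length hist)) - qdata q D\<bar>" by auto
  have lp: "real (length hist) > 0" using h by simp
  have "a = \<bar>(\<Sum>B\<leftarrow>hist. qdist q S B) - real (length hist) * qdata q D\<bar> / real (length hist)"
    unfolding a qdist_avg using lp by (simp add: field_simps abs_divide)
  also have "\<dots> \<le> (\<Sum>B\<leftarrow>hist. Merr D S Q B) / real (length hist)"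
    using lp Merr_ge[OF Q(1) q] by (intro divide_right_mono abs_sum_list_bound) auto
  finally show "a \<le> (\<Sum>B\<leftarrow>hist. Merr D S Q B) / real (length hist)" .
qed

lemma avg_err_le1:
  assumes Q: "finite Q" "Q \<noteq> {}" and S: "finite S" and v: "valid S A"
    and qb: "\<forall>q\<in>Q. \<forall>x\<in>S. 0 \<le> q x \<and> q x \<le> 1" and qD: "\<forall>q\<in>Q. 0 \<le> qdata q D \<and> qdata q D \<le> 1"
  shows "Max ((\<lambda>q. \<bar>qdist q S A - qdata q D\<bar>) ` Q) \<le> 1"
proof (rule Max.boundedI)
  show "finite ((\<lambda>q. \<bar>qdist q S A - qdata q D\<bar>) ` Q)" using Q by simp
  show "(\<lambda>q. \<bar>qdist q S A - qdata q D\<bar>) ` Q \<noteq> {}" using Q by simp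
  fix a assume "a \<in> (\<lambda>q. \<bar>qdist q S A - qdata q D\<bar>) ` Q"
  then obtain q where q: "q \<in> Q" and a: "a = \<bar>qdist q S A - qdata q D\<bar>" by auto
  have "0 \<le> qdist q S A" "qdist q S A \<le> 1" using qdist_bounds[OF v S] qb q by auto
  then show "a \<le> 1" using a qD q by auto
qed

lemma qdata_bounds:
  assumes "\<forall>x\<in>set D. 0 \<le> q x \<and> q x \<le> 1" "D \<noteq> []"
  shows "0 \<le> qdata q D \<and> qdata q D \<le> 1"
proof -
  have "0 \<le> (\<Sum>x\<leftarrow>D. q x) \<and> (\<Sum>x\<leftarrow>D. q x) \<le> real (length D)"
    using assms(1) by (induction D) (auto intro: add_nonneg_nonneg add_mono)
  then show ?thesis unfolding qdata_def using assms(2) by (simp add: field_simps)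
qed

lemma empirical_valid:
  assumes "D \<noteq> []"
  shows "valid (set D) (empirical D)"
proof -
  have lp: "real (length D) > 0" using assms by simp
  have cp: "\<And>x. x \<in> set D \<Longrightarrow> 0 < count_list D x" by (metis count_list_0_iff gr0I)
  have pos: "\<forall>x\<in>set D. 0 < empirical D x"
    unfolding empirical_def using lp cp by (auto intro!: divide_pos_pos)
  have "(\<Sum>x\<in>set D. empirical D x) = real (\<Sum>x\<in>set D. count_list D x) / real (length D)"
    unfolding empirical_def by (simp add: sum_divide_distrib)
  also have "(\<Sum>x\<in>set D. count_list D x) = length D" by (rule sum_count_set) auto
  finally have "(\<Sum>x\<in>set D. empirical D x) = 1" using lp by simp
  then show ?thesis unfolding valid_def using pos by (auto simp: empirical_def)
qed

lemma empirical_xent: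
  assumes "D \<noteq> []" "\<forall>x\<in>set D. 0 \<le> \<mu> x" "(\<Sum>x\<in>set D. \<mu> x) = 1"
  shows "xent (set D) \<mu> (empirical D) \<le> ln (real (length D))"
proof -
  have lp: "real (length D) > 0" using assms by simp
  have "- (\<mu> x * ln (empirical D x)) \<le> \<mu> x * ln (real (length D))" if x: "x \<in> set D" for x
  proof -
    have c: "1 \<le> count_list D x" using x by (metis count_list_0_iff less_one not_less)
    have "1 / real (length D) \<le> empirical D x" unfolding empirical_def using c lp
      by (intro divide_right_mono) auto
    then have "ln (1 / real (length D)) \<le> ln (empirical D x)" using lp by (intro ln_mono) auto
    then have "- ln (empirical D x) \<le> ln (real (length D))" using lp by (simp add: ln_div)
    then have "\<mu> x * (- ln (empirical D x)) \<le> \<mu> x * ln (real (length D))"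
      using assms(2) x by (intro mult_left_mono) auto
    then show ?thesis by simp
  qed
  then have "(\<Sum>x\<in>set D. - (\<mu> x * ln (empirical D x))) \<le> (\<Sum>x\<in>set D. \<mu> x * ln (real (length D)))"
    by (intro sum_mono)
  also have "\<dots> = ln (real (length D))" using assms(3) by (simp add: sum_distrib_right[symmetric])
  finally show ?thesis unfolding xent_def by (simp add: sum_negf)
qed




lemma final_alg:
  fixes lq lm lb \<Lambda> Tr f R0 L \<eta> f' \<rho> a0 lK \<tau> :: real
  assumes lq: "lq \<ge> 2/3" and lm: "lm \<ge> 2/3" and lb: "lb > 0" and Lam: "\<Lambda> \<ge> 5 * lq"
    and T1: "\<Lambda> * sqrt lm / lq + lb \<le> 4 * Tr" and T2: "4 * Tr \<le> \<Lambda> * sqrt lm / lq + lb + 4"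
    and f: "f \<ge> 0" and R0: "R0 = sqrt (lq * (sqrt lm + lb) / \<Lambda>)"
    and L: "L = \<Lambda> / sqrt (2 * Tr)" and eta: "\<eta> = L / 4" and f': "f' = f + R0"
    and rho: "\<rho> = min (L / 4) (1 / (4 * (f' + R0)))" and a0: "a0 = 1 / (4 * \<rho>) + 6 * \<rho> * f'^2"
    and lK: "0 \<le> lK" "lK \<le> 3/2 * lq"
    and tau: "\<tau> = 8 * \<rho> * lm + Tr * a0 + (Tr * lK + lb) / \<eta>"
  shows "\<tau> / Tr \<le> 50 * (R0 + f)"
proof -
  have lqp: "lq > 0" using lq by simp
  have Lp: "\<Lambda> > 0" using Lam lqp by simp
  have slm: "sqrt lm \<ge> 4/5"
  proof -
    have "(4/5::real) = sqrt ((4/5)^2)" by simp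
    also have "\<dots> \<le> sqrt lm" using lm by (intro real_sqrt_le_mono) (simp add: power2_eq_square)
    finally show ?thesis .
  qed
  have a: "\<Lambda> * sqrt lm / lq \<ge> 0" using Lp lqp lm by (intro divide_nonneg_nonneg mult_nonneg_nonneg) auto
  have Tp: "Tr > 0" using T1 a lb by linarith
  have F: "lq * Tr \<le> (sqrt lm + lb) * \<Lambda> / 2"
  proof -
    have "lq * (4 * Tr) \<le> lq * (\<Lambda> * sqrt lm / lq + lb + 4)" using T2 lqp by (intro mult_left_mono) auto
    also have "\<dots> = \<Lambda> * sqrt lm + lq * lb + 4 * lq" using lqp by (simp add: field_simps)
    finally have h0: "lq * Tr \<le> \<Lambda> * sqrt lm / 4 + lq * lb / 4 + lq" by simp
    have h1: "lq * lb / 4 \<le> \<Lambda> * lb / 20" using Lam lb by (simp add: field_simps)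
    have h2: "lq \<le> \<Lambda> * sqrt lm / 4"
    proof -
      have "\<Lambda> * (4/5) \<le> \<Lambda> * sqrt lm" using slm Lp by (intro mult_left_mono) auto
      then show ?thesis using Lam by simp
    qed
    have h: "lq * Tr \<le> \<Lambda> * sqrt lm / 4 + \<Lambda> * lb / 20 + \<Lambda> * sqrt lm / 4" using h0 h1 h2 by linarith
    have "0 < \<Lambda> * lb" using Lp lb by simp
    have "(sqrt lm + lb) * \<Lambda> / 2 = \<Lambda> * sqrt lm / 4 + \<Lambda> * lb / 2 + \<Lambda> * sqrt lm / 4"
      by (simp add: field_simps)
    then show ?thesis using h \<open>0 < \<Lambda> * lb\<close> by linarith
  qed
  define s where "s = sqrt (2 * Tr)"
  have sp: "s > 0" unfolding s_def using Tp by simp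
  have s2: "s^2 = 2 * Tr" unfolding s_def using Tp by simp
  have R0p: "R0 > 0" unfolding R0 using lqp slm lb Lp by (intro real_sqrt_gt_zero) simp
  have R02: "R0^2 = lq * (sqrt lm + lb) / \<Lambda>" unfolding R0 using lqp slm lb Lp by simp
  have G: "s / \<Lambda> \<le> R0 / lq"
  proof -
    have "(s / \<Lambda>)^2 \<le> (R0 / lq)^2"
    proof -
      have "(s / \<Lambda>)^2 = 2 * Tr / \<Lambda>^2" using s2 by (simp add: power_divide)
      also have "\<dots> \<le> (sqrt lm + lb) / (\<Lambda> * lq)"
        using F Lp lqp by (simp add: field_simps power2_eq_square)
      also have "\<dots> = (R0 / lq)^2"
      proof -
        have "(R0/lq)^2 = R0^2/lq^2" by (simp add: power_divide)
        also have "\<dots> = (lq*(sqrt lm+lb)/\<Lambda>)/lq^2" by (simp add: R02)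
        also have "\<dots> = (sqrt lm+lb)/(\<Lambda>*lq)" using lqp Lp by (simp add: power2_eq_square field_simps)
        finally show ?thesis by simp
      qed
      finally show ?thesis .
    qed
    then show ?thesis using R0p lqp sp Lp
      by (meson divide_nonneg_nonneg less_imp_le power2_le_imp_le)
  qed
  have invL: "1 / L = s / \<Lambda>" unfolding L s_def by simp
  have Lpos: "L > 0" unfolding L using Lp Tp by simp
  have iL: "1 / L \<le> 3/2 * R0"
  proof -
    have "R0 / lq \<le> 3/2 * R0" using lq R0p by (simp add: field_simps)
    then show ?thesis using G invL by linarith
  qed
  have fR: "f' + R0 \<ge> 2 * R0" unfolding f' using f by simp
  have rho_eq: "\<rho> = 1 / (4 * (f' + R0))"
  proof -
    have "1 / (f' + R0) \<le> L"
    proof -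
      have "1 / L \<le> f' + R0" using iL fR R0p by simp
      then show ?thesis using Lpos R0p fR by (simp add: field_simps)
    qed
    then have d: "1 / (f' + R0) / 4 \<le> L / 4" by (rule divide_right_mono) simp
    have eq: "1 / (4 * (f' + R0)) = (1 / (f' + R0)) / 4" by (simp add: divide_divide_eq_left mult.commute)
    have "1 / (4 * (f' + R0)) \<le> L / 4" by (simp only: eq d)
    then show ?thesis unfolding rho by simp
  qed
  have fRp: "f' + R0 > 0" using fR R0p by simp
  have a0b: "a0 \<le> 5/2 * f + 7/2 * R0"
  proof -
    have e: "a0 = (f' + R0) + 3/2 * (f'^2 / (f' + R0))" unfolding a0 rho_eq using fRp by (simp add: field_simps)
    have i: "f'^2 / (f' + R0) \<le> f'"
    proof -
      have "f'^2 \<le> f' * (f' + R0)" using R0p f unfolding f' by (simp add: power2_eq_square field_simps)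
      then show ?thesis using fRp by (simp add: field_simps)
    qed
    have "3/2 * (f'^2 / (f' + R0)) \<le> 3/2 * f'" by (rule mult_left_mono[OF i]) simp
    then have "a0 \<le> (f' + R0) + 3/2 * f'" using e by linarith
    moreover have "(f' + R0) + 3/2 * f' = 5/2 * f + 7/2 * R0" unfolding f' by (simp add: field_simps)
    ultimately show ?thesis by linarith
  qed
  have lmT: "lm / Tr \<le> 4 * R0^2"
  proof -
    have slm0: "sqrt lm > 0" using lm by simp
    have "lq * (\<Lambda> * sqrt lm / lq + lb) \<le> lq * (4 * Tr)" using T1 lqp by (intro mult_left_mono) auto
    moreover have "lq * (\<Lambda> * sqrt lm / lq + lb) = \<Lambda> * sqrt lm + lq * lb" using lqp by (simp add: distrib_left)
    ultimately have "\<Lambda> * sqrt lm + lq * lb \<le> 4 * lq * Tr" by simp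
    then have "\<Lambda> * sqrt lm \<le> 4 * lq * Tr" using mult_pos_pos[OF lqp lb] by linarith
    then have le: "\<Lambda> * sqrt lm / (4 * lq) \<le> Tr" using lqp by (simp add: field_simps)
    have pos: "0 < \<Lambda> * sqrt lm / (4 * lq)" using Lp slm0 lqp by simp
    have m: "0 < Tr * (\<Lambda> * sqrt lm / (4 * lq))" by (rule mult_pos_pos[OF Tp pos])
    have "lm / Tr \<le> lm / (\<Lambda> * sqrt lm / (4 * lq))"
      by (rule divide_left_mono[OF le _ m]) (use lm in simp)
    also have "\<dots> = 4 * lq * sqrt lm / \<Lambda>"
    proof -
      define sl where "sl = sqrt lm"
      have "lm = sl * sl" unfolding sl_def using lm by simp
      moreover have "sl > 0" using slm0 sl_def by simp
      ultimately show ?thesis unfolding sl_def[symmetric] using Lp lqp by (simp add: field_simps)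
    qed
    also have "\<dots> \<le> 4 * R0^2" unfolding R02 using lqp Lp lb by (simp add: field_simps)
    finally show ?thesis .
  qed
  have t1: "8 * \<rho> * lm / Tr \<le> 4 * R0"
  proof -
    have gen: "\<And>u::real. u > 0 \<Longrightarrow> 8 * (1 / (4 * u)) * lm / Tr = 2 / u * (lm / Tr)"
      using Tp by (simp add: field_simps)
    have "8 * \<rho> * lm / Tr = 2 / (f' + R0) * (lm / Tr)" unfolding rho_eq by (rule gen[OF fRp])
    also have "\<dots> \<le> 2 / (2 * R0) * (4 * R0^2)"
      using lmT fR R0p fRp lm Tp by (intro mult_mono divide_left_mono) auto
    also have "\<dots> = 4 * R0" using R0p by (simp add: power2_eq_square)
    finally show ?thesis .
  qed
  have t3: "lK / \<eta> \<le> 6 * R0"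
  proof -
    have "lK / \<eta> = 4 * lK * (1 / L)" unfolding eta using Lpos by simp
    also have "\<dots> \<le> 4 * (3/2 * lq) * (R0 / lq)" using lK G invL R0p lqp sp Lp by (intro mult_mono) auto
    also have "\<dots> = 6 * R0" using lqp by simp
    finally show ?thesis .
  qed
  have t4: "lb / (\<eta> * Tr) \<le> 24 * R0"
  proof -
    have lbT: "lb / Tr \<le> 4" using T1 a Tp by (simp add: field_simps)
    have "lb / (\<eta> * Tr) = 4 * (lb / Tr) * (1 / L)" unfolding eta using Lpos Tp by (simp add: field_simps)
    also have "\<dots> \<le> 4 * 4 * (3/2 * R0)" using lbT iL lb Tp Lpos by (intro mult_mono) auto
    finally show ?thesis by simp
  qed
  have "\<tau> / Tr = 8 * \<rho> * lm / Tr + a0 + lK / \<eta> + lb / (\<eta> * Tr)"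
    unfolding tau using Tp Lpos unfolding eta by (simp add: field_simps)
  also have "\<dots> \<le> 4 * R0 + (5/2 * f + 7/2 * R0) + 6 * R0 + 24 * R0"
    using t1 a0b t3 t4 by linarith
  also have "\<dots> \<le> 50 * (R0 + f)" using f R0p by simp
  finally show ?thesis .
qed




lemma bme_bdd:
  assumes Q: "finite Q" "Q \<noteq> {}"
  shows "bdd_below ((\<lambda>\<mu>. Max ((\<lambda>q. \<bar>qdata q D - (\<Sum>x\<in>S. \<mu> x * q x)\<bar>) ` Q)) ` P)"
proof (rule bdd_belowI[of _ 0])
  fix y assume "y \<in> (\<lambda>\<mu>. Max ((\<lambda>q. \<bar>qdata q D - (\<Sum>x\<in>S. \<mu> x * q x)\<bar>) ` Q)) ` P"
  then obtain \<mu> where y: "y = Max ((\<lambda>q. \<bar>qdata q D - (\<Sum>x\<in>S. \<mu> x * q x)\<bar>) ` Q)" by auto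
  obtain q where "q \<in> Q" using Q by auto
  then have "\<bar>qdata q D - (\<Sum>x\<in>S. \<mu> x * q x)\<bar> \<le> y" unfolding y using Q by (intro Max_ge) auto
  then show "0 \<le> y" by (meson abs_ge_zero order_trans)
qed

lemma bme_nonneg:
  assumes Q: "finite Q" "Q \<noteq> {}" and P: "prob_simplex S \<noteq> {}"
  shows "0 \<le> best_mixture_error D Q S"
proof -
  have "0 \<le> (INF \<mu> \<in> prob_simplex S. Max ((\<lambda>q. \<bar>qdata q D - (\<Sum>x\<in>S. \<mu> x * q x)\<bar>) ` Q))"
  proof (rule cINF_greatest[OF P])
    fix \<mu>
    obtain q where "q \<in> Q" using Q by auto
    then have "\<bar>qdata q D - (\<Sum>x\<in>S. \<mu> x * q x)\<bar> \<le> Max ((\<lambda>q. \<bar>qdata q D - (\<Sum>x\<in>S. \<mu> x * q x)\<bar>) ` Q)"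
      using Q by (intro Max_ge) auto
    then show "0 \<le> Max ((\<lambda>q. \<bar>qdata q D - (\<Sum>x\<in>S. \<mu> x * q x)\<bar>) ` Q)" by (meson abs_ge_zero order_trans)
  qed
  then show ?thesis unfolding best_mixture_error_def .
qed

lemma bme_exists:
  assumes Q: "finite Q" "Q \<noteq> {}" and P: "prob_simplex S \<noteq> {}" and lt: "best_mixture_error D Q S < t"
  shows "\<exists>\<mu>\<in>prob_simplex S. \<forall>q\<in>Q. \<bar>qdist q S \<mu> - qdata q D\<bar> \<le> t"
proof -
  from lt obtain \<mu> where mu: "\<mu> \<in> prob_simplex S" and lt2: "Max ((\<lambda>q. \<bar>qdata q D - (\<Sum>x\<in>S. \<mu> x * q x)\<bar>) ` Q) < t"
    unfolding best_mixture_error_def using cINF_less_iff[OF P bme_bdd[OF Q]] by blast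
  have "\<forall>q\<in>Q. \<bar>qdist q S \<mu> - qdata q D\<bar> \<le> t"
  proof
    fix q assume q: "q \<in> Q"
    have "\<bar>qdata q D - (\<Sum>x\<in>S. \<mu> x * q x)\<bar> \<le> Max ((\<lambda>q. \<bar>qdata q D - (\<Sum>x\<in>S. \<mu> x * q x)\<bar>) ` Q)"
      using Q q by (intro Max_ge) auto
    then show "\<bar>qdist q S \<mu> - qdata q D\<bar> \<le> t" using lt2 unfolding qdist_def by (simp add: abs_minus_commute)
  qed
  then show ?thesis using mu by blast
qed

lemma bme_singleton:
  assumes S: "S = {x0}" and A: "valid S A" and Q: "finite Q" "Q \<noteq> {}"
  shows "Max ((\<lambda>q. \<bar>qdist q S A - qdata q D\<bar>) ` Q) = best_mixture_error D Q S"
proof -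
  have A1: "A x0 = 1" using A S by (simp add: valid_def)
  define c where "c = Max ((\<lambda>q. \<bar>qdist q S A - qdata q D\<bar>) ` Q)"
  have eq: "Max ((\<lambda>q. \<bar>qdata q D - (\<Sum>x\<in>S. \<mu> x * q x)\<bar>) ` Q) = c" if "\<mu> \<in> prob_simplex S" for \<mu>
  proof -
    have "\<mu> x0 = 1" using that S by (simp add: prob_simplex_def)
    then show ?thesis unfolding c_def qdist_def S using A1 by (simp add: abs_minus_commute)
  qed
  have P: "prob_simplex S \<noteq> {}"
  proof -
    have "(\<lambda>_. 1) \<in> prob_simplex S" using S by (simp add: prob_simplex_def)
    then show ?thesis by blast
  qed
  have "best_mixture_error D Q S = (INF \<mu> \<in> prob_simplex S. c)"
    unfolding best_mixture_error_def using eq by (intro INF_cong) auto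
  also have "\<dots> = c" using P by simp
  finally show ?thesis unfolding c_def by simp
qed

lemma valid_simplex: "valid S A \<Longrightarrow> A \<in> prob_simplex S"
  by (auto simp: valid_def prob_simplex_def less_imp_le)




lemma main_lemma:
  fixes mech :: sel_mech and X :: "nat set" and Dpriv Dpub :: "nat list"
    and Q :: "(nat \<Rightarrow> real) set" and eps \<beta> :: real
  assumes X: "finite X" and Dn: "Dpriv \<noteq> []" and Dm: "Dpub \<noteq> []"
    and sX: "set Dpriv \<subseteq> X" "set Dpub \<subseteq> X" and Qf: "finite Q" and Q2: "card Q \<ge> 2"
    and qX: "\<forall>q\<in>Q. \<forall>x\<in>X. 0 \<le> q x \<and> q x \<le> 1" and eps: "0 < eps" and b: "0 < \<beta>" "\<beta> < 1"
  shows "(let n = real (length Dpriv); m = real (length Dpub);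
          T = nat \<lceil>1 / 4 * (n * eps * sqrt (ln m) / ln (real (card Q)) + ln (1 / \<beta>))\<rceil>
      in pmw_pub_prob mech Dpriv Dpub Q eps T
           (\<lambda>A. A \<in> prob_simplex (set Dpub) \<and> (\<forall>x. x \<notin> set Dpub \<longrightarrow> A x = 0) \<and>
                Max ((\<lambda>q. \<bar>qdist q (set Dpub) A - qdata q Dpriv\<bar>) ` Q)
                  \<le> 50 * (sqrt (ln (real (card Q)) * (sqrt (ln m) + ln (1 / \<beta>)) / (n * eps))
                         + best_mixture_error Dpriv Q (set Dpub)))
         \<ge> ennreal (1 - \<beta>))"
proof -
  define n where "n = real (length Dpriv)"
  define m where "m = real (length Dpub)"
  define lq where "lq = ln (real (card Q))"
  define lm where "lm = ln m"
  define lb where "lb = ln (1 / \<beta>)"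
  define \<Lambda> where "\<Lambda> = n * eps"
  define T where "T = nat \<lceil>1 / 4 * (n * eps * sqrt (ln m) / ln (real (card Q)) + ln (1 / \<beta>))\<rceil>"
  define Tr where "Tr = real T"
  define S where "S = set Dpub"
  define f where "f = best_mixture_error Dpriv Q S"
  define R0 where "R0 = sqrt (ln (real (card Q)) * (sqrt (ln m) + ln (1 / \<beta>)) / (n * eps))"
  define P where "P = (\<lambda>A. A \<in> prob_simplex S \<and> (\<forall>x. x \<notin> S \<longrightarrow> A x = 0) \<and>
                Max ((\<lambda>q. \<bar>qdist q S A - qdata q Dpriv\<bar>) ` Q) \<le> 50 * (R0 + f))"
  define E where "E = (\<lambda>hist. P (\<lambda>x. (\<Sum>B\<leftarrow>hist. B x) / real T))"
  define e0 where "e0 = eps / sqrt (2 * real T)"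
  define L where "L = n * e0"
  define \<eta> where "\<eta> = L / 4"
  define f' where "f' = f + R0"
  define \<rho> where "\<rho> = min (L / 4) (1 / (4 * (f' + R0)))"
  define a0 where "a0 = 1 / (4 * \<rho>) + 6 * \<rho> * f'^2"
  define K where "K = sqrt 2 * real (card Q)"
  define lK where "lK = ln K"
  define \<tau> where "\<tau> = 8 * \<rho> * lm + Tr * a0 + (Tr * lK + lb) / \<eta>"
  define A0 where "A0 = empirical Dpub"
  have Qne: "Q \<noteq> {}" using Q2 by auto
  have Sf: "finite S" "S \<noteq> {}" unfolding S_def using Dm by auto
  have npos: "n > 0" unfolding n_def using Dn by simp
  have mge1: "m \<ge> 1" unfolding m_def using Dm by (simp add: Suc_le_eq)
  have ln2: "ln (2::real) \<ge> 2/3" by (rule ln2_ge_two_thirds)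
  have lq: "lq \<ge> ln 2" unfolding lq_def using Q2 by simp
  have lq23: "lq \<ge> 2/3" using lq ln2 by simp
  have lqp: "lq > 0" using lq23 by simp
  have lm0: "lm \<ge> 0" unfolding lm_def using mge1 by simp
  have lbp: "lb > 0" unfolding lb_def using b by simp
  have Lamp: "\<Lambda> > 0" unfolding \<Lambda>_def using npos eps by simp
  have xnn: "\<Lambda> * sqrt lm / lq \<ge> 0" using Lamp lqp lm0 by simp
  define x where "x = 1 / 4 * (\<Lambda> * sqrt lm / lq + lb)"
  have xT: "x = 1 / 4 * (n * eps * sqrt (ln m) / ln (real (card Q)) + ln (1 / \<beta>))"
    unfolding x_def \<Lambda>_def lm_def lq_def lb_def ..
  have xp: "x > 0" unfolding x_def using xnn lbp by simp
  have Tx: "Tr = real (nat \<lceil>x\<rceil>)" unfolding Tr_def T_def xT ..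
  have T1: "x \<le> Tr" unfolding Tx using xp by linarith
  have T2: "Tr \<le> x + 1" unfolding Tx using xp by linarith
  have Tpos: "Tr > 0" using T1 xp by simp
  have T0: "T > 0" using Tpos unfolding Tr_def by simp
  have R0': "R0 = sqrt (lq * (sqrt lm + lb) / \<Lambda>)" unfolding R0_def lq_def lm_def lb_def \<Lambda>_def ..
  have sl_lb: "sqrt lm + lb > 0" using lm0 lbp by (simp add: add_nonneg_pos)
  have R0arg: "lq * (sqrt lm + lb) / \<Lambda> > 0" using lqp sl_lb Lamp by simp
  have R0p: "R0 > 0" unfolding R0' using R0arg by simp
  have R0sq: "R0^2 = lq * (sqrt lm + lb) / \<Lambda>" unfolding R0' using R0arg by simp
  have qb: "\<forall>q\<in>Q. \<forall>x\<in>S. 0 \<le> q x \<and> q x \<le> 1" using qX sX unfolding S_def by blast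
  have qD: "\<forall>q\<in>Q. 0 \<le> qdata q Dpriv \<and> qdata q Dpriv \<le> 1"
    using qX sX Dn by (intro ballI qdata_bounds) auto
  have A0v: "valid S A0" unfolding A0_def S_def by (rule empirical_valid[OF Dm])
  have Pne: "prob_simplex S \<noteq> {}" using valid_simplex[OF A0v] by blast
  have f0: "f \<ge> 0" unfolding f_def by (rule bme_nonneg[OF Qf Qne Pne])
  obtain \<mu> where mu: "\<mu> \<in> prob_simplex S" "\<forall>q\<in>Q. \<bar>qdist q S \<mu> - qdata q Dpriv\<bar> \<le> f'"
    using bme_exists[OF Qf Qne Pne, of Dpriv "f + R0"] R0p unfolding f'_def f_def by auto
  have mu1: "\<forall>x\<in>S. 0 \<le> \<mu> x" "(\<Sum>x\<in>S. \<mu> x) = 1" using mu(1) by (auto simp: prob_simplex_def)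
  have e0p: "e0 > 0" unfolding e0_def using eps T0 by simp
  have Lp: "L > 0" unfolding L_def using npos e0p by simp
  have L': "L = \<Lambda> / sqrt (2 * Tr)" unfolding L_def e0_def \<Lambda>_def Tr_def by simp
  have fRp: "f' + R0 > 0" unfolding f'_def using f0 R0p by simp
  have rhop: "\<rho> > 0" unfolding \<rho>_def using Lp fRp by simp
  have rhoL: "\<rho> \<le> L / 4" unfolding \<rho>_def by simp
  have etap: "\<eta> > 0" unfolding \<eta>_def using Lp by simp
  have Econd: "E hist" if hl: "length hist = T" and hv: "\<forall>B\<in>set hist. valid S B"
      and hs: "sum_list (map (Merr Dpriv S Q) hist) \<le> \<tau>" for hist
  proof -
    have hne: "hist \<noteq> []" using hl T0 by auto
    define avg where "avg = (\<lambda>x. (\<Sum>B\<leftarrow>hist. B x) / real (length hist))"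
    have av: "valid S avg" unfolding avg_def by (rule avg_valid[OF Sf(1) hne hv])
    have le1: "Max ((\<lambda>q. \<bar>qdist q S avg - qdata q Dpriv\<bar>) ` Q) \<le> 1"
      by (rule avg_err_le1[OF Qf Qne Sf(1) av qb qD])
    have errb: "Max ((\<lambda>q. \<bar>qdist q S avg - qdata q Dpriv\<bar>) ` Q) \<le> 50 * (R0 + f)"
    proof (cases "length Dpub = 1")
      case True
      then obtain x0 where "Dpub = [x0]" by (cases Dpub) auto
      then have S1: "S = {x0}" unfolding S_def by simp
      have "Max ((\<lambda>q. \<bar>qdist q S avg - qdata q Dpriv\<bar>) ` Q) = f"
        unfolding f_def by (rule bme_singleton[OF S1 av Qf Qne])
      then show ?thesis using R0p f0 by simp
    next
      case False
      have "length Dpub \<noteq> 0" using Dm by simp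
      then have "length Dpub \<ge> 2" using False by linarith
      then have m2: "m \<ge> 2" unfolding m_def by simp
      have lm23: "lm \<ge> 2/3"
      proof -
        have "ln 2 \<le> lm" unfolding lm_def using m2 by simp
        then show ?thesis using ln2 by simp
      qed
      show ?thesis
      proof (cases "\<Lambda> < 5 * lq")
        case True
        have slm: "sqrt lm \<ge> 4/5"
        proof -
          have "(4/5::real) = sqrt ((4/5)^2)" by simp
          also have "\<dots> \<le> sqrt lm" using lm23 by (intro real_sqrt_le_mono) (simp add: power2_eq_square)
          finally show ?thesis .
        qed
        have "R0^2 = lq * (sqrt lm + lb) / \<Lambda>" by (rule R0sq)
        also have "\<dots> \<ge> lq * (4/5) / (5 * lq)"
        proof -
          have "lq * (4/5) \<le> lq * (sqrt lm + lb)" using slm lbp lqp by (intro mult_left_mono) auto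
          then have "lq * (4/5) / (5 * lq) \<le> lq * (sqrt lm + lb) / (5 * lq)" using lqp by (intro divide_right_mono) auto
          also have "\<dots> \<le> lq * (sqrt lm + lb) / \<Lambda>"
            using True Lamp lqp lm0 lbp by (intro divide_left_mono) auto
          finally show ?thesis .
        qed
        finally have "R0^2 \<ge> 4/25" using lqp by simp
        then have "(2/5::real)^2 \<le> R0^2" by (simp add: power2_eq_square)
        then have "R0 \<ge> 2/5" by (rule power2_le_imp_le) (use R0p in simp)
        then show ?thesis using le1 f0 by simp
      next
        case False
        then have Lam5: "\<Lambda> \<ge> 5 * lq" by simp
        have lK: "0 \<le> lK" "lK \<le> 3/2 * lq"
        proof -
          have c0: "real (card Q) \<ge> 2" using Q2 by simp
          have "lK = ln (sqrt 2) + lq" unfolding lK_def K_def lq_def using c0 by (simp add: ln_mult)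
          moreover have "ln (sqrt 2) = ln 2 / 2" by (simp add: ln_sqrt)
          moreover have "ln (2::real) \<ge> 0" by simp
          ultimately show "0 \<le> lK" "lK \<le> 3/2 * lq" using lq lqp by auto
        qed
        have fa: "\<tau> / Tr \<le> 50 * (R0 + f)"
        proof (rule final_alg[OF lq23 lm23 lbp Lam5 _ _ f0 R0' L' refl f'_def \<rho>_def a0_def lK \<tau>_def[unfolded \<eta>_def]])
          show "\<Lambda> * sqrt lm / lq + lb \<le> 4 * Tr" using T1 unfolding x_def by simp
          show "4 * Tr \<le> \<Lambda> * sqrt lm / lq + lb + 4" using T2 unfolding x_def by (simp add: field_simps)
        qed
        have "Max ((\<lambda>q. \<bar>qdist q S avg - qdata q Dpriv\<bar>) ` Q) \<le> (\<Sum>B\<leftarrow>hist. Merr Dpriv S Q B) / real (length hist)"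
          unfolding avg_def by (rule avg_err[OF Qf Qne hne])
        also have "\<dots> \<le> \<tau> / Tr" unfolding hl Tr_def[symmetric] using hs Tpos by (intro divide_right_mono) auto
        finally show ?thesis using fa by simp
      qed
    qed
    show ?thesis unfolding E_def P_def using av errb hl unfolding avg_def
      by (auto simp: valid_simplex valid_def)
  qed
  have claim: "ennreal (1 - (sqrt 2 * card Q)^T * exp (\<eta> * (sum_list (map (Merr Dpriv S Q) []) + 8 * \<rho> * xent S \<mu> A0 + T * a0 - \<tau>)))
      \<le> pmw_succ mech Dpriv S Q e0 E T A0 []"
  proof (rule pmw_claim[OF Sf Qf Qne qb qD Dn e0p _ _ rhop _ mu1 mu(2) a0_def])
    show "0 \<le> \<eta>" using etap by simp
    show "\<eta> \<le> e0 * real (length Dpriv) / 2" unfolding \<eta>_def L_def n_def using e0p by simp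
    show "4 * \<eta> * \<rho> \<le> (real (length Dpriv) * e0)^2 / 4"
    proof -
      have "4 * \<eta> * \<rho> \<le> 4 * \<eta> * (L / 4)" using rhoL etap by (intro mult_left_mono) auto
      also have "\<dots> = (real (length Dpriv) * e0)^2 / 4" unfolding \<eta>_def L_def n_def by (simp add: power2_eq_square)
      finally show ?thesis .
    qed
    show "\<And>hist. length hist = T \<Longrightarrow> \<forall>B\<in>set hist. valid S B \<Longrightarrow> sum_list (map (Merr Dpriv S Q) hist) \<le> \<tau> \<Longrightarrow> E hist"
      using Econd by blast
    show "length [] + T = T" by simp
    show "valid S A0" by (rule A0v)
    show "\<forall>B\<in>set []. valid S B" by simp
  qed
  have xe: "xent S \<mu> A0 \<le> lm" unfolding S_def A0_def lm_def m_def
    using empirical_xent[OF Dm] mu1 unfolding S_def by blast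
  have Kp: "K > 0" unfolding K_def using Qne Qf by (simp add: card_gt_0_iff)
  have "(sqrt 2 * card Q)^T * exp (\<eta> * (sum_list (map (Merr Dpriv S Q) []) + 8 * \<rho> * xent S \<mu> A0 + T * a0 - \<tau>))
      \<le> K^T * exp (\<eta> * (8 * \<rho> * lm + Tr * a0 - \<tau>))"
  proof -
    have "\<eta> * (8 * \<rho> * xent S \<mu> A0 + T * a0 - \<tau>) \<le> \<eta> * (8 * \<rho> * lm + Tr * a0 - \<tau>)"
      using xe rhop etap unfolding Tr_def by (intro mult_left_mono) auto
    then show ?thesis unfolding K_def by (intro mult_left_mono) auto
  qed
  also have "\<dots> = \<beta>"
  proof -
    have "\<eta> * (8 * \<rho> * lm + Tr * a0 - \<tau>) = - (Tr * lK + lb)" unfolding \<tau>_def using etap by (simp add: field_simps)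
    moreover have "K^T = exp (Tr * lK)" unfolding lK_def Tr_def using Kp by (simp add: exp_of_nat_mult[symmetric] ln_realpow[symmetric])
    moreover have "exp (- lb) = \<beta>" unfolding lb_def using b by (simp add: ln_div exp_minus)
    ultimately show ?thesis by (simp add: exp_add[symmetric] exp_minus)
  qed
  finally have pb: "ennreal (1 - \<beta>) \<le> ennreal (1 - (sqrt 2 * card Q)^T * exp (\<eta> * (sum_list (map (Merr Dpriv S Q) []) + 8 * \<rho> * xent S \<mu> A0 + T * a0 - \<tau>)))"
    by (intro ennreal_leI) simp
  have "pmw_pub_prob mech Dpriv Dpub Q eps T P = pmw_succ mech Dpriv S Q e0 E T A0 []"
    unfolding pmw_pub_prob_def S_def e0_def E_def A0_def by simp
  then have final: "ennreal (1 - \<beta>) \<le> pmw_pub_prob mech Dpriv Dpub Q eps T P"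
    using pb claim by simp
  show ?thesis unfolding Let_def using final unfolding P_def S_def R0_def f_def T_def n_def m_def by simp
qed


theorem mainTheorem3:
  shows "\<exists>cT>0. \<exists>C>0. \<forall>(mech::sel_mech) (X::nat set) (Dpriv::nat list) (Dpub::nat list)
            (Q::(nat \<Rightarrow> real) set) (eps::real) (\<beta>::real).
     finite X \<and> Dpriv \<noteq> [] \<and> Dpub \<noteq> [] \<and> set Dpriv \<subseteq> X \<and> set Dpub \<subseteq> X \<and>
     finite Q \<and> card Q \<ge> 2 \<and> (\<forall>q\<in>Q. \<forall>x\<in>X. 0 \<le> q x \<and> q x \<le> 1) \<and>
     0 < eps \<and> 0 < \<beta> \<and> \<beta> < 1 \<longrightarrow>
     (let n = real (length Dpriv); m = real (length Dpub);
          T = nat \<lceil>cT * (n * eps * sqrt (ln m) / ln (real (card Q)) + ln (1 / \<beta>))\<rceil>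
      in pmw_pub_prob mech Dpriv Dpub Q eps T
           (\<lambda>A. A \<in> prob_simplex (set Dpub) \<and> (\<forall>x. x \<notin> set Dpub \<longrightarrow> A x = 0) \<and>
                Max ((\<lambda>q. \<bar>qdist q (set Dpub) A - qdata q Dpriv\<bar>) ` Q)
                  \<le> C * (sqrt (ln (real (card Q)) * (sqrt (ln m) + ln (1 / \<beta>)) / (n * eps))
                         + best_mixture_error Dpriv Q (set Dpub)))
         \<ge> ennreal (1 - \<beta>))"
  apply (rule exI[of _ "1/4::real"])
  apply (rule conjI)
   apply simp
  apply (rule exI[of _ "50::real"])
  apply (rule conjI)
   apply simp
  apply (intro allI impI)
  apply (elim conjE)
  apply (rule main_lemma)
            apply assumption+
  done

end
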